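(* Let $k,\ell\in\mathbb{N}$ with $\ell$ even. Let $L\subseteq[-1,0]\times[0,k]$ and $R\subseteq[\ell,\ell+1]\times[0,k]$ be polyominos, and define $P=L\cup R\cup([0,\ell]\times[0,k])$. Color the cells of the plane in a chessboard fashion, with the two colors named black and white so that $b\ge w$, where $b$ and $w$ are the numbers of black and white cells contained in $P$. If $\ell\ge 2k$, then the number of cells of $P$ left uncovered by a maximum domino packing of $P$ is exactly $b-w$. Moreover, there exists a maximum domino packing of $P$ in which the rectangle $[k+1,\ell-k-1]\times[0,k]$ is completely covered and every domino intersecting this rectangle is horizontal.
   Context: A cell is a unit square $[i,i+1]\times[j,j+1]$ with $i,j\in\mathbb{Z}$. A polyomino is a finite union of cells. A domino is an axis-parallel $1\times2$ or $2\times1$ rectangle with integer corners. A domino packing of $P$ is a set of pairwise interior-disjoint dominos contained in $P$. A maximum packing is one with the largest possible number of dominos. A domino is horizontal if it is $2\times 1$, i.e., of width $2$ and height $1$. *)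

theory Defs
  imports Main
begin

text \<open>A cell [i,i+1] x [j,j+1] is represented by its lower-left corner (i,j).
  A polyomino is represented by the (finite) set of its cells.
  A domino is represented by the set of its two cells.\<close>

type_synonym cell = "int \<times> int"

definition hdomino :: "cell set \<Rightarrow> bool" where
  "hdomino d \<longleftrightarrow> (\<exists>i j. d = {(i, j), (i + 1, j)})"

definition vdomino :: "cell set \<Rightarrow> bool" where
  "vdomino d \<longleftrightarrow> (\<exists>i j. d = {(i, j), (i, j + 1)})"

definition domino :: "cell set \<Rightarrow> bool" where
  "domino d \<longleftrightarrow> hdomino d \<or> vdomino d"

definition rect_cells :: "int \<Rightarrow> int \<Rightarrow> int \<Rightarrow> int \<Rightarrow> cell set" where
  "rect_cells x1 x2 y1 y2 = {(i, j). x1 \<le> i \<and> i + 1 \<le> x2 \<and> y1 \<le> j \<and> j + 1 \<le> y2}"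

definition packing :: "cell set \<Rightarrow> cell set set \<Rightarrow> bool" where
  "packing P D \<longleftrightarrow> finite D \<and> (\<forall>d\<in>D. domino d \<and> d \<subseteq> P) \<and>
     (\<forall>d\<in>D. \<forall>d'\<in>D. d \<noteq> d' \<longrightarrow> d \<inter> d' = {})"

definition max_packing :: "cell set \<Rightarrow> cell set set \<Rightarrow> bool" where
  "max_packing P D \<longleftrightarrow> packing P D \<and> (\<forall>D'. packing P D' \<longrightarrow> card D' \<le> card D)"

definition colour :: "cell \<Rightarrow> bool" where
  "colour c \<longleftrightarrow> even (fst c + snd c)"

definition uncovered :: "cell set \<Rightarrow> cell set set \<Rightarrow> cell set" where
  "uncovered P D = P - \<Union>D"

end

theory Submission
  imports Defs
begin

definition tiles :: "cell set \<Rightarrow> cell set \<Rightarrow> cell set set \<Rightarrow> bool" where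
 "tiles M S D \<longleftrightarrow> finite D \<and> (\<forall>d\<in>D. domino d) \<and> (\<forall>d\<in>D. \<forall>d'\<in>D. d \<noteq> d' \<longrightarrow> d \<inter> d' = {})
    \<and> \<Union>D = S \<and> (\<forall>d\<in>D. d \<inter> M \<noteq> {} \<longrightarrow> hdomino d)"

definition tileable :: "cell set \<Rightarrow> cell set \<Rightarrow> bool" where
 "tileable M S \<longleftrightarrow> (\<exists>D. tiles M S D)"

definition seg :: "int \<Rightarrow> int \<Rightarrow> int \<Rightarrow> cell set" where
 "seg u v y = {(x, y'). y' = y \<and> u \<le> x \<and> x \<le> v}"

definition vert :: "int set \<Rightarrow> int \<Rightarrow> cell set" where
 "vert V y = {(x, y'). x \<in> V \<and> (y' = y \<or> y' = y + 1)}"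

lemma tileable_empty: "tileable M {}"
  unfolding tileable_def tiles_def by (rule exI[of _ "{}"]) auto

lemma tileable_Un:
  assumes "tileable M A" "tileable M B" "A \<inter> B = {}"
  shows "tileable M (A \<union> B)"
proof -
  obtain D1 where D1: "tiles M A D1" using assms(1) tileable_def by blast
  obtain D2 where D2: "tiles M B D2" using assms(2) tileable_def by blast
  have s1: "\<And>d. d \<in> D1 \<Longrightarrow> d \<subseteq> A" using D1 unfolding tiles_def by blast
  have s2: "\<And>d. d \<in> D2 \<Longrightarrow> d \<subseteq> B" using D2 unfolding tiles_def by blast
  have p1: "\<forall>d\<in>D1. \<forall>d'\<in>D1. d \<noteq> d' \<longrightarrow> d \<inter> d' = {}" using D1 unfolding tiles_def by blast
  have p2: "\<forall>d\<in>D2. \<forall>d'\<in>D2. d \<noteq> d' \<longrightarrow> d \<inter> d' = {}" using D2 unfolding tiles_def by blast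
  have disj: "\<forall>d\<in>D1 \<union> D2. \<forall>d'\<in>D1 \<union> D2. d \<noteq> d' \<longrightarrow> d \<inter> d' = {}"
  proof (intro ballI impI)
    fix d d' assume d: "d \<in> D1 \<union> D2" and d': "d' \<in> D1 \<union> D2" and ne: "d \<noteq> d'"
    show "d \<inter> d' = {}"
    proof (cases "d \<in> D1")
      case True
      show ?thesis
      proof (cases "d' \<in> D1")
        case True
        then show ?thesis using p1 \<open>d \<in> D1\<close> ne by blast
      next
        case False
        then have "d' \<subseteq> B" using d' s2 by blast
        moreover have "d \<subseteq> A" using \<open>d \<in> D1\<close> s1 by blast
        ultimately show ?thesis using assms(3) by blast
      qed
    next
      case False
      then have dB: "d \<subseteq> B" "d \<in> D2" using d s2 by blast+
      show ?thesis
      proof (cases "d' \<in> D1")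
        case True
        then have "d' \<subseteq> A" using s1 by blast
        then show ?thesis using dB assms(3) by blast
      next
        case False
        then show ?thesis using p2 dB d' ne by blast
      qed
    qed
  qed
  have "tiles M (A \<union> B) (D1 \<union> D2)"
    using D1 D2 disj unfolding tiles_def by (simp add: Ball_def)
  then show ?thesis unfolding tileable_def by blast
qed

lemma hdomino_tileable:
  "tileable M {(x, y), (x + 1, y)}"
  unfolding tileable_def tiles_def
  by (rule exI[of _ "{{(x, y), (x + 1, y)}}"]) (auto simp: domino_def hdomino_def)

lemma vdomino_tileable:
  "(x, y) \<notin> M \<Longrightarrow> (x, y + 1) \<notin> M \<Longrightarrow> tileable M {(x, y), (x, y + 1)}"
  unfolding tileable_def tiles_def
  by (rule exI[of _ "{{(x, y), (x, y + 1)}}"]) (auto simp: domino_def vdomino_def)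

lemma tileable_seg_aux: "tileable M (seg u (u + 2 * int n - 1) y)"
proof (induction n arbitrary: u)
  case 0
  have "seg u (u + 2 * int 0 - 1) y = {}" by (auto simp: seg_def)
  then show ?case using tileable_empty by simp
next
  case (Suc n)
  have eq: "seg u (u + 2 * int (Suc n) - 1) y = {(u, y), (u + 1, y)} \<union> seg (u + 2) (u + 2 + 2 * int n - 1) y"
    by (auto simp: seg_def)
  show ?case unfolding eq
    by (rule tileable_Un[OF hdomino_tileable Suc.IH]) (auto simp: seg_def)
qed

lemma tileable_seg: "odd (v - u) \<Longrightarrow> tileable M (seg u v y)"
proof (cases "v < u")
  case True
  then have "seg u v y = {}" by (auto simp: seg_def)
  then show ?thesis using tileable_empty by simp
next
  case False
  assume o: "odd (v - u)"
  define n where "n = nat ((v - u + 1) div 2)"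
  have h: "v = u + 2 * ((v - u + 1) div 2) - 1" using o by presburger
  have "(v - u + 1) div 2 \<ge> 0" using False by simp
  then have "v = u + 2 * int n - 1" using h unfolding n_def by simp
  then show ?thesis using tileable_seg_aux by simp
qed

lemma tileable_vert:
  assumes "finite V" "\<forall>x\<in>V. (x, y) \<notin> M \<and> (x, y + 1) \<notin> M"
  shows "tileable M (vert V y)"
  using assms
proof (induction V rule: finite_induct)
  case empty
  have "vert {} y = {}" by (auto simp: vert_def)
  then show ?case using tileable_empty by simp
next
  case (insert x F)
  have eq: "vert (insert x F) y = {(x, y), (x, y + 1)} \<union> vert F y" by (auto simp: vert_def)
  show ?case unfolding eq
    by (rule tileable_Un[OF vdomino_tileable insert.IH]) (use insert in \<open>auto simp: vert_def\<close>)
qed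

definition ex :: "(nat \<Rightarrow> int) \<Rightarrow> (nat \<Rightarrow> int) \<Rightarrow> nat \<Rightarrow> int" where
  "ex a b i = (if even (b i - a i) then (if even (a i + int i) then 1 else -1) else 0)"

definition Dw :: "(nat \<Rightarrow> int) \<Rightarrow> (nat \<Rightarrow> int) \<Rightarrow> nat \<Rightarrow> int" where
  "Dw a b n = (\<Sum>i<n. ex a b i)"

lemma Dw_Suc: "Dw a b (Suc n) = Dw a b n + ex a b n"
  by (simp add: Dw_def)

lemma Dw_0: "Dw a b 0 = 0" by (simp add: Dw_def)

lemma ex_bound: "ex a b i \<in> {-1, 0, 1}" by (simp add: ex_def)

fun ptr :: "(nat \<Rightarrow> int) \<Rightarrow> nat \<Rightarrow> int \<Rightarrow> nat \<Rightarrow> int" where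
  "ptr a r1 f 0 = f"
| "ptr a r1 f (Suc t) = ptr a r1 f t + (if even (ptr a r1 f t - a (r1 + Suc t)) then 1 else -1)"

fun qtr :: "(nat \<Rightarrow> int) \<Rightarrow> nat \<Rightarrow> int \<Rightarrow> nat \<Rightarrow> int" where
  "qtr b r1 f 0 = f"
| "qtr b r1 f (Suc t) = qtr b r1 f t + (if even (qtr b r1 f t - b (r1 + Suc t)) then -1 else 1)"

lemma ptr_par: "even (ptr a r1 f t - f - int t)"
proof (induction t)
  case (Suc t)
  have "ptr a r1 f (Suc t) = ptr a r1 f t + 1 \<or> ptr a r1 f (Suc t) = ptr a r1 f t - 1" by simp
  then show ?case using Suc by presburger
qed simp

lemma qtr_par: "even (qtr b r1 f t - f - int t)"
proof (induction t)
  case (Suc t)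
  have "qtr b r1 f (Suc t) = qtr b r1 f t + 1 \<or> qtr b r1 f (Suc t) = qtr b r1 f t - 1" by simp
  then show ?case using Suc by presburger
qed simp

lemma ptr_shift: "ptr a r1 (f + 2 * u) t = ptr a r1 f t + 2 * u"
proof (induction t)
  case (Suc t)
  have "even (ptr a r1 f t + 2 * u - a (r1 + Suc t)) = even (ptr a r1 f t - a (r1 + Suc t))"
    by presburger
  then show ?case using Suc by simp
qed simp

lemma ptr_lip: "s \<le> t \<Longrightarrow> ptr a r1 f s - int (t - s) \<le> ptr a r1 f t \<and> ptr a r1 f t \<le> ptr a r1 f s + int (t - s)"
proof (induction t)
  case (Suc t)
  show ?case
  proof (cases "s = Suc t")
    case False
    then have "s \<le> t" using Suc.prems by simp
    then show ?thesis using Suc.IH by (auto simp: Suc_diff_le)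
  qed simp
qed simp

lemma qtr_lip: "s \<le> t \<Longrightarrow> qtr b r1 f s - int (t - s) \<le> qtr b r1 f t \<and> qtr b r1 f t \<le> qtr b r1 f s + int (t - s)"
proof (induction t)
  case (Suc t)
  show ?case
  proof (cases "s = Suc t")
    case False
    then have "s \<le> t" using Suc.prems by simp
    then show ?thesis using Suc.IH by (auto simp: Suc_diff_le)
  qed simp
qed simp

lemma eps_diff:
  fixes p q A B f :: int and r1 t :: nat
  assumes "even (p - f - int t)" "even (q - f - int t)"
  shows "(if even (q - B) then -1 else 1) - (if even (p - A) then 1 else -1)
     = 2 * (if even (f + int r1) then 1 else -1) * (if even (B - A) then (if even (A + int (r1 + Suc t)) then 1 else -1) else 0 :: int)"
  using assms by (auto split: if_splits; presburger)

lemma diff_formula: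
  assumes "even (f - a r1)" "even (b r1 - a r1)"
  shows "qtr b r1 f t - ptr a r1 f t
     = 2 * (if even (f + int r1) then 1 else -1) * (Dw a b (r1 + t + 1) - Dw a b r1) - 2"
proof (induction t)
  case 0
  have "Dw a b (r1 + 0 + 1) - Dw a b r1 = ex a b r1" by (simp add: Dw_Suc)
  moreover have "ex a b r1 = (if even (f + int r1) then 1 else -1)"
    using assms unfolding ex_def by presburger
  ultimately show ?case by simp
next
  case (Suc t)
  have e: "(if even (qtr b r1 f t - b (r1 + Suc t)) then -1 else 1) - (if even (ptr a r1 f t - a (r1 + Suc t)) then 1 else -1)
     = 2 * (if even (f + int r1) then 1 else -1) * ex a b (r1 + Suc t)"
    unfolding ex_def by (rule eps_diff[OF ptr_par qtr_par])
  have d: "Dw a b (r1 + Suc t + 1) = Dw a b (r1 + t + 1) + ex a b (r1 + Suc t)"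
    by (simp add: Dw_Suc)
  show ?case using Suc e d by (simp add: algebra_simps)
qed

definition vset :: "int \<Rightarrow> int \<Rightarrow> int set" where
  "vset p q = {x. p \<le> x \<and> x \<le> q \<and> even (x - p)}"

definition vrow :: "int \<Rightarrow> int \<Rightarrow> int \<Rightarrow> cell set" where
  "vrow p q y = {(x, y'). y' = y \<and> x \<in> vset p q}"

lemma key_iff:
  fixes p q p' q' x A' B' :: int
  assumes "p \<le> q" "even (q - p)"
    "p' = p + (if even (p - A') then 1 else -1)"
    "q' = q + (if even (q - B') then -1 else 1)"
  shows "(min p p' \<le> x \<and> x \<le> max q q') \<longleftrightarrow> (x \<in> vset p q \<or> x \<in> vset p' q')"
  using assms unfolding vset_def by (auto split: if_splits; presburger)

lemma key_disj:
  fixes p q p' q' x A' :: int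
  assumes "p' = p + (if even (p - A') then 1 else -1)"
  shows "\<not> (x \<in> vset p q \<and> x \<in> vset p' q')"
  using assms unfolding vset_def by (auto split: if_splits; presburger)

lemma step_lemma:
  fixes p q p' q' A B A' B' y :: int and U M :: "cell set"
  assumes tW: "tileable M (U - vrow p q y)"
    and U_rows: "\<forall>x z. (x, z) \<in> U \<longrightarrow> z \<le> y"
    and U_row_y: "\<forall>x. (x, y) \<in> U \<longleftrightarrow> A \<le> x \<and> x \<le> B"
    and pq: "p \<le> q" "even (q - p)" "A \<le> p" "q \<le> B"
    and p': "p' = p + (if even (p - A') then 1 else -1)"
    and q': "q' = q + (if even (q - B') then -1 else 1)"
    and bnd: "A' \<le> min p p'" "max q q' \<le> B'"
    and M: "\<forall>x. p \<le> x \<and> x \<le> q \<longrightarrow> (x, y) \<notin> M \<and> (x, y + 1) \<notin> M"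
  shows "tileable M ((U \<union> seg A' B' (y + 1)) - vrow p' q' (y + 1))"
proof -
  define \<alpha> where "\<alpha> = min p p'"
  define \<beta> where "\<beta> = max q q'"
  have ki: "\<And>x. (\<alpha> \<le> x \<and> x \<le> \<beta>) \<longleftrightarrow> (x \<in> vset p q \<or> x \<in> vset p' q')"
    unfolding \<alpha>_def \<beta>_def by (rule key_iff[OF pq(1,2) p' q'])
  have kd: "\<And>x. \<not> (x \<in> vset p q \<and> x \<in> vset p' q')" by (rule key_disj[OF p'])
  have apar: "even (\<alpha> - A')" unfolding \<alpha>_def using p' by (auto split: if_splits; presburger)
  have bpar: "even (B' - \<beta>)" unfolding \<beta>_def using q' by (auto split: if_splits; presburger)
  have bnd': "A' \<le> \<alpha>" "\<beta> \<le> B'" using bnd unfolding \<alpha>_def \<beta>_def by simp_all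
  have ab: "\<alpha> \<le> p" "q \<le> \<beta>" unfolding \<alpha>_def \<beta>_def by auto
  have vs: "\<And>x. x \<in> vset p q \<Longrightarrow> p \<le> x \<and> x \<le> q" unfolding vset_def by auto
  define W where "W = U - vrow p q y"
  define V where "V = vert (vset p q) y"
  define S1 where "S1 = seg A' (\<alpha> - 1) (y + 1)"
  define S2 where "S2 = seg (\<beta> + 1) B' (y + 1)"
  have eq: "(U \<union> seg A' B' (y + 1)) - vrow p' q' (y + 1) = ((W \<union> V) \<union> S1) \<union> S2"
  proof (rule set_eqI)
    fix c :: cell
    obtain x z where c: "c = (x, z)" by (cases c)
    show "c \<in> (U \<union> seg A' B' (y + 1)) - vrow p' q' (y + 1) \<longleftrightarrow> c \<in> ((W \<union> V) \<union> S1) \<union> S2"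
    proof (cases "z = y + 1")
      case True
      have nU: "(x, z) \<notin> U" using U_rows True by fastforce
      have "c \<in> (U \<union> seg A' B' (y + 1)) - vrow p' q' (y + 1) \<longleftrightarrow> A' \<le> x \<and> x \<le> B' \<and> x \<notin> vset p' q'"
        using nU True c by (auto simp: seg_def vrow_def)
      also have "\<dots> \<longleftrightarrow> x \<in> vset p q \<or> (A' \<le> x \<and> x \<le> \<alpha> - 1) \<or> (\<beta> + 1 \<le> x \<and> x \<le> B')"
        using ki[of x] kd[of x] bnd' ab vs[of x] pq(1) by (cases "x \<in> vset p q"; cases "x \<in> vset p' q'") auto
      also have "\<dots> \<longleftrightarrow> c \<in> ((W \<union> V) \<union> S1) \<union> S2"
        using nU True c unfolding W_def V_def S1_def S2_def by (auto simp: seg_def vert_def vrow_def)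
      finally show ?thesis .
    next
      case False
      have "c \<in> (U \<union> seg A' B' (y + 1)) - vrow p' q' (y + 1) \<longleftrightarrow> (x, z) \<in> U"
        using False c by (auto simp: seg_def vrow_def)
      also have "\<dots> \<longleftrightarrow> c \<in> ((W \<union> V) \<union> S1) \<union> S2"
      proof
        assume "(x, z) \<in> U"
        then show "c \<in> ((W \<union> V) \<union> S1) \<union> S2"
          using c unfolding W_def V_def by (auto simp: vert_def vrow_def)
      next
        assume "c \<in> ((W \<union> V) \<union> S1) \<union> S2"
        then have "c \<in> W \<or> c \<in> V" using False c unfolding S1_def S2_def by (auto simp: seg_def)
        then show "(x, z) \<in> U"
        proof
          assume "c \<in> W" then show ?thesis using c W_def by auto
        next
          assume "c \<in> V"
          then have "z = y" "x \<in> vset p q" using False c unfolding V_def vert_def by auto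
          then show ?thesis using U_row_y vs pq by force
        qed
      qed
      finally show ?thesis .
    qed
  qed
  have tV: "tileable M V" unfolding V_def
  proof (rule tileable_vert)
    show "finite (vset p q)" unfolding vset_def by (rule finite_subset[of _ "{p..q}"]) auto
    show "\<forall>x\<in>vset p q. (x, y) \<notin> M \<and> (x, y + 1) \<notin> M" using M vs by blast
  qed
  have t1: "tileable M (W \<union> V)"
  proof (rule tileable_Un)
    show "tileable M W" using tW W_def by simp
    show "tileable M V" by (rule tV)
    show "W \<inter> V = {}"
      unfolding W_def V_def using U_rows by (fastforce simp: vert_def vrow_def)
  qed
  have t2: "tileable M ((W \<union> V) \<union> S1)"
  proof (rule tileable_Un[OF t1])
    show "tileable M S1" unfolding S1_def by (rule tileable_seg) (use apar in presburger)
    show "(W \<union> V) \<inter> S1 = {}"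
      unfolding W_def V_def S1_def using U_rows vs ab by (fastforce simp: vert_def vrow_def seg_def)
  qed
  have t3: "tileable M (((W \<union> V) \<union> S1) \<union> S2)"
  proof (rule tileable_Un[OF t2])
    show "tileable M S2" unfolding S2_def by (rule tileable_seg) (use bpar in presburger)
    show "((W \<union> V) \<union> S1) \<inter> S2 = {}"
      unfolding W_def V_def S1_def S2_def using U_rows vs ab pq by (fastforce simp: vert_def vrow_def seg_def)
  qed
  show ?thesis using t3 eq by simp
qed

definition row :: "(nat \<Rightarrow> int) \<Rightarrow> (nat \<Rightarrow> int) \<Rightarrow> nat \<Rightarrow> cell set" where
  "row a b j = seg (a j) (b j) (int j)"

lemma mem_rows: "(x, z) \<in> (\<Union>j\<in>{r1..n}. row a b j) \<longleftrightarrow> (\<exists>j. r1 \<le> j \<and> j \<le> n \<and> z = int j \<and> a j \<le> x \<and> x \<le> b j)"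
  by (auto simp: row_def seg_def)

lemma episode:
  fixes a b :: "nat \<Rightarrow> int" and k r1 r2 :: nat and M :: "cell set"
  assumes rk: "r2 < k" and ex0: "ex a b r1 \<noteq> 0"
    and pos: "\<forall>j. r1 < j \<and> j \<le> r2 \<longrightarrow> ex a b r1 * (Dw a b j - Dw a b r1) > 0"
    and ret: "Dw a b (Suc r2) = Dw a b r1"
    and ab: "\<forall>j. a j \<le> 0 \<and> int k - 1 \<le> b j"
    and Mx: "\<forall>x y. (x, y) \<in> M \<longrightarrow> int k \<le> x"
  shows "tileable M (\<Union>j\<in>{r1..r2}. row a b j)"
proof (cases "r1 < r2")
  case False
  show ?thesis
  proof (cases "r1 = r2")
    case True
    then show ?thesis using ret ex0 by (simp add: Dw_Suc)
  next
    case False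
    then have "{r1..r2} = {}" using \<open>\<not> r1 < r2\<close> by auto
    then show ?thesis using tileable_empty by simp
  qed
next
  case True
  define m where "m = r2 - r1"
  have m1: "1 \<le> m" using True m_def by simp
  define s where "s = ex a b r1"
  have odd_row: "even (b r1 - a r1)" using ex0 unfolding ex_def by (auto split: if_splits)
  have s_def2: "s = (if even (a r1 + int r1) then 1 else -1)" using odd_row unfolding s_def ex_def by simp
  define f0 where "f0 = a r1"
  define \<Delta> where "\<Delta> = ptr a r1 f0 (m - 1) - f0"
  define t0 where "t0 = (int (m - 1) - \<Delta>) div 2"
  define u where "u = (t0 - f0 + 1) div 2"
  define f where "f = f0 + 2 * u"
  have evD: "even (int (m - 1) - \<Delta>)" using ptr_par[of a r1 f0 "m - 1"] unfolding \<Delta>_def by presburger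
  have t0eq: "2 * t0 = int (m - 1) - \<Delta>" using evD unfolding t0_def by presburger
  have fb: "t0 \<le> f" "f \<le> t0 + 1" unfolding f_def u_def by presburger+
  have fpar: "even (f - a r1)" unfolding f_def f0_def by simp
  define P where "P = ptr a r1 f"
  define Q where "Q = qtr b r1 f"
  have Pshift: "\<And>t. P t = ptr a r1 f0 t + 2 * u" unfolding P_def f_def by (rule ptr_shift)
  have sf: "(if even (f + int r1) then 1 else -1) = s"
  proof -
    have "even (f + int r1) = even (a r1 + int r1)" using fpar by presburger
    then show ?thesis using s_def2 by simp
  qed
  have diff: "\<And>t. Q t - P t = 2 * s * (Dw a b (r1 + t + 1) - Dw a b r1) - 2"
    using diff_formula[of f a r1 b, OF fpar odd_row] sf unfolding P_def Q_def by simp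
  have s1: "s = 1 \<or> s = -1" using s_def2 by simp
  have npos: "\<And>t. t \<le> m - 1 \<Longrightarrow> P t \<le> Q t"
  proof -
    fix t assume "t \<le> m - 1"
    then have "r1 < r1 + t + 1" "r1 + t + 1 \<le> r2" using m_def m1 by auto
    then have "s * (Dw a b (r1 + t + 1) - Dw a b r1) > 0" using pos s_def by blast
    then show "P t \<le> Q t" using diff[of t] by simp
  qed
  have last: "Q (m - 1) = P (m - 1)"
  proof -
    have r2eq: "r1 + (m - 1) + 1 = r2" using m_def m1 by simp
    have "s * (Dw a b r2 - Dw a b r1) > 0" using pos s_def True by blast
    moreover have "Dw a b r2 + ex a b r2 = Dw a b r1" using ret by (simp add: Dw_Suc)
    moreover have "ex a b r2 \<in> {-1, 0, 1}" by (rule ex_bound)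
    ultimately have "s * (Dw a b r2 - Dw a b r1) = 1" using s1 by auto
    then show ?thesis using diff[of "m - 1"] r2eq by simp
  qed
  have endm: "Q m - P m = -2"
  proof -
    have "r1 + m + 1 = Suc r2" using m_def True by simp
    then show ?thesis using diff[of m] ret by simp
  qed
  have Pm1: "P (m - 1) = f + \<Delta>" using Pshift[of "m - 1"] unfolding \<Delta>_def f_def by simp
  have lower: "\<And>t. t \<le> m - 1 \<Longrightarrow> 0 \<le> P t"
  proof -
    fix t assume t: "t \<le> m - 1"
    have l1: "P 0 - int (t - 0) \<le> P t" using ptr_lip[of 0 t a r1 f] unfolding P_def by simp
    have l2: "P (m - 1) \<le> P t + int (m - 1 - t)" using ptr_lip[OF t, of a r1 f] unfolding P_def by simp
    have "P 0 = f" unfolding P_def by simp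
    then show "0 \<le> P t" using l1 l2 Pm1 t0eq fb t by linarith
  qed
  have upper: "\<And>t. t \<le> m - 1 \<Longrightarrow> Q t \<le> int k - 1"
  proof -
    fix t assume t: "t \<le> m - 1"
    have l1: "Q t \<le> Q 0 + int (t - 0)" using qtr_lip[of 0 t b r1 f] unfolding Q_def by simp
    have l2: "Q t - int (m - 1 - t) \<le> Q (m - 1)" using qtr_lip[OF t, of b r1 f] unfolding Q_def by simp
    have "Q 0 = f" unfolding Q_def by simp
    moreover have "int m \<le> int k - 1" using m_def rk by simp
    ultimately show "Q t \<le> int k - 1" using l1 l2 last Pm1 t0eq fb t m1 by linarith
  qed
  have main: "t \<le> m \<Longrightarrow> tileable M ((\<Union>j\<in>{r1..r1 + t}. row a b j) - vrow (P t) (Q t) (int (r1 + t)))" for t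
  proof (induction t)
    case 0
    have P0: "P 0 = f" "Q 0 = f" unfolding P_def Q_def by simp_all
    have f0b: "0 \<le> f" "f \<le> int k - 1" using lower[of 0] upper[of 0] P0 by simp_all
    have eq: "(\<Union>j\<in>{r1..r1 + 0}. row a b j) - vrow (P 0) (Q 0) (int (r1 + 0))
       = seg (a r1) (f - 1) (int r1) \<union> seg (f + 1) (b r1) (int r1)"
    proof -
      have "a r1 \<le> f" "f \<le> b r1" using f0b ab by (metis order_trans)+
      then show ?thesis unfolding P0 by (auto simp: row_def seg_def vrow_def vset_def; presburger)
    qed
    have "tileable M (seg (a r1) (f - 1) (int r1) \<union> seg (f + 1) (b r1) (int r1))"
    proof (rule tileable_Un)
      show "tileable M (seg (a r1) (f - 1) (int r1))" by (rule tileable_seg) (use fpar in presburger)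
      show "tileable M (seg (f + 1) (b r1) (int r1))" by (rule tileable_seg) (use fpar odd_row in presburger)
    qed (auto simp: seg_def)
    then show ?case using eq by simp
  next
    case (Suc t)
    have t: "t \<le> m - 1" using Suc.prems by simp
    define U where "U = (\<Union>j\<in>{r1..r1 + t}. row a b j)"
    define y where "y = int (r1 + t)"
    have IH: "tileable M (U - vrow (P t) (Q t) y)" using Suc U_def y_def by simp
    have U_rows: "\<forall>x z. (x, z) \<in> U \<longrightarrow> z \<le> y" unfolding U_def y_def mem_rows by auto
    have U_row_y: "\<forall>x. (x, y) \<in> U \<longleftrightarrow> a (r1 + t) \<le> x \<and> x \<le> b (r1 + t)"
      unfolding U_def y_def mem_rows by (auto simp del: of_nat_add)
    have pq: "P t \<le> Q t" "even (Q t - P t)" "a (r1 + t) \<le> P t" "Q t \<le> b (r1 + t)"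
    proof -
      have "a (r1 + t) \<le> 0" "int k - 1 \<le> b (r1 + t)" using ab by auto
      moreover have "Q t - P t = 2 * (s * (Dw a b (r1 + t + 1) - Dw a b r1) - 1)" using diff[of t] by simp
      ultimately show "P t \<le> Q t" "even (Q t - P t)" "a (r1 + t) \<le> P t" "Q t \<le> b (r1 + t)"
        using npos[OF t] lower[OF t] upper[OF t] by auto
    qed
    have p': "P (Suc t) = P t + (if even (P t - a (r1 + Suc t)) then 1 else -1)" unfolding P_def by simp
    have q': "Q (Suc t) = Q t + (if even (Q t - b (r1 + Suc t)) then -1 else 1)" unfolding Q_def by simp
    have bnd: "a (r1 + Suc t) \<le> min (P t) (P (Suc t)) \<and> max (Q t) (Q (Suc t)) \<le> b (r1 + Suc t)"
    proof (cases "Suc t \<le> m - 1")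
      case True
      have "a (r1 + Suc t) \<le> 0" "int k - 1 \<le> b (r1 + Suc t)" using ab by auto
      then show ?thesis using lower[OF True] upper[OF True] lower[OF t] upper[OF t] by simp
    next
      case False
      then have "Suc t = m" using Suc.prems by simp
      then have "t = m - 1" by simp
      then have e1: "Q t = P t" "Q (Suc t) - P (Suc t) = -2" using last endm \<open>Suc t = m\<close> by auto
      have "P (Suc t) = P t + 1" "Q (Suc t) = Q t - 1" using e1 p' q' by (auto split: if_splits)
      moreover have "a (r1 + Suc t) \<le> 0" "int k - 1 \<le> b (r1 + Suc t)" using ab by auto
      ultimately show ?thesis using lower[OF t] upper[OF t] by simp
    qed
    have M: "\<forall>x. P t \<le> x \<and> x \<le> Q t \<longrightarrow> (x, y) \<notin> M \<and> (x, y + 1) \<notin> M"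
      using upper[OF t] Mx by fastforce
    have st: "tileable M ((U \<union> seg (a (r1 + Suc t)) (b (r1 + Suc t)) (y + 1)) - vrow (P (Suc t)) (Q (Suc t)) (y + 1))"
      by (rule step_lemma[OF IH U_rows U_row_y pq p' q' _ _ M]) (use bnd in auto)
    have e1: "U \<union> seg (a (r1 + Suc t)) (b (r1 + Suc t)) (y + 1) = (\<Union>j\<in>{r1..r1 + Suc t}. row a b j)"
      unfolding U_def y_def
      apply (auto simp: row_def seg_def le_Suc_eq)
      apply (rule_tac x="Suc (r1 + t)" in bexI)
       apply auto
      done
    have e2: "y + 1 = int (r1 + Suc t)" unfolding y_def by simp
    show ?case using st unfolding e1 unfolding e2 .
  qed
  have "tileable M ((\<Union>j\<in>{r1..r1 + m}. row a b j) - vrow (P m) (Q m) (int (r1 + m)))" by (rule main) simp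
  moreover have "vrow (P m) (Q m) (int (r1 + m)) = {}" using endm by (auto simp: vrow_def vset_def)
  moreover have "r1 + m = r2" using m_def True by simp
  ultimately show ?thesis by simp
qed

lemma ivt_up:
  fixes g :: "nat \<Rightarrow> int"
  assumes step: "\<forall>i. \<bar>g (Suc i) - g i\<bar> \<le> 1"
  shows "x \<le> y \<Longrightarrow> g x \<le> v \<Longrightarrow> v \<le> g y \<Longrightarrow> \<exists>z. x \<le> z \<and> z \<le> y \<and> g z = v"
proof (induction y)
  case 0
  then show ?case by auto
next
  case (Suc y)
  show ?case
  proof (cases "x \<le> y \<and> v \<le> g y")
    case True
    then show ?thesis using Suc.IH Suc.prems by (meson le_SucI)
  next
    case False
    show ?thesis
    proof (cases "x = Suc y")
      case True
      then show ?thesis using Suc.prems by auto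
    next
      case False
      then have "x \<le> y" using Suc.prems by simp
      then have "g y < v" using \<open>\<not> (x \<le> y \<and> v \<le> g y)\<close> by simp
      then have "g (Suc y) = v" using step[rule_format, of y] Suc.prems by linarith
      then show ?thesis using Suc.prems by auto
    qed
  qed
qed

lemma ivt_down:
  fixes g :: "nat \<Rightarrow> int"
  assumes step: "\<forall>i. \<bar>g (Suc i) - g i\<bar> \<le> 1"
  shows "x \<le> y \<Longrightarrow> v \<le> g x \<Longrightarrow> g y \<le> v \<Longrightarrow> \<exists>z. x \<le> z \<and> z \<le> y \<and> g z = v"
proof -
  assume h: "x \<le> y" "v \<le> g x" "g y \<le> v"
  have "\<forall>i. \<bar>(- g (Suc i)) - (- g i)\<bar> \<le> 1" using step by (metis abs_minus_commute minus_diff_eq diff_minus_eq_add uminus_add_conv_diff)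
  from ivt_up[of "\<lambda>i. - g i", OF this h(1), of "- v"] h obtain z where "x \<le> z" "z \<le> y" "- g z = - v" by auto
  then show ?thesis by auto
qed

lemma mem_rows2: "(x, z) \<in> (\<Union>j\<in>{r..<n}. row a b j) \<longleftrightarrow> (\<exists>j. r \<le> j \<and> j < n \<and> z = int j \<and> a j \<le> x \<and> x \<le> b j)"
  by (auto simp: row_def seg_def)

lemma global:
  fixes a b :: "nat \<Rightarrow> int" and k :: nat and M :: "cell set" and s0 :: int and c0 :: bool
  assumes ab: "\<forall>j. a j \<le> 0 \<and> int k - 1 \<le> b j"
    and Mx: "\<forall>x y. (x, y) \<in> M \<longrightarrow> int k \<le> x"
    and Mb: "\<forall>j<k. (b j, int j) \<notin> M"
    and s0: "s0 = 1 \<or> s0 = -1"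
    and c0: "c0 = (s0 = 1)"
  shows "r \<le> k \<Longrightarrow> s0 * Dw a b r \<le> s0 * Dw a b k \<Longrightarrow>
    \<exists>H. H \<subseteq> (\<Union>j\<in>{r..<k}. row a b j) \<and> (\<forall>c\<in>H. colour c = c0) \<and> H \<inter> M = {} \<and>
        tileable M ((\<Union>j\<in>{r..<k}. row a b j) - H)"
proof (induction r rule: measure_induct_rule[where f="\<lambda>r. k - r"])
  case (less r)
  note IH = less.IH
  show ?case
  proof (cases "r = k")
    case True
    then show ?thesis using tileable_empty by (intro exI[of _ "{}"]) auto
  next
    case False
    then have rk: "r < k" using less.prems by simp
    have split1: "(\<Union>j\<in>{r..<k}. row a b j) = row a b r \<union> (\<Union>j\<in>{Suc r..<k}. row a b j)"
      using rk apply (auto simp: row_def seg_def)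
      apply (metis Suc_leI le_neq_implies_less)+
      done
    have disj1: "row a b r \<inter> (\<Union>j\<in>{Suc r..<k}. row a b j) = {}" by (auto simp: row_def seg_def)
    have exb: "ex a b r \<in> {-1, 0, 1}" by (rule ex_bound)
    have stepb: "\<forall>i. \<bar>s0 * Dw a b (Suc i) - s0 * Dw a b i\<bar> \<le> 1"
    proof
      fix i
      have "ex a b i \<in> {-1, 0, 1}" by (rule ex_bound)
      then show "\<bar>s0 * Dw a b (Suc i) - s0 * Dw a b i\<bar> \<le> 1" using s0 by (auto simp: Dw_Suc algebra_simps)
    qed
    show ?thesis
    proof (cases "ex a b r = 0")
      case True
      have "s0 * Dw a b (Suc r) \<le> s0 * Dw a b k" using less.prems True by (simp add: Dw_Suc)
      then obtain H where H: "H \<subseteq> (\<Union>j\<in>{Suc r..<k}. row a b j)" "\<forall>c\<in>H. colour c = c0" "H \<inter> M = {}"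
        "tileable M ((\<Union>j\<in>{Suc r..<k}. row a b j) - H)"
        using IH[of "Suc r"] rk by (metis diff_less_mono2 lessI Suc_leI)
      have oddr: "odd (b r - a r)" using True unfolding ex_def by (simp split: if_splits)
      have tr: "tileable M (row a b r)" unfolding row_def
        by (rule tileable_seg) (rule oddr)
      have d2: "row a b r \<inter> ((\<Union>j\<in>{Suc r..<k}. row a b j) - H) = {}" using disj1 by blast
      have t2: "tileable M (row a b r \<union> ((\<Union>j\<in>{Suc r..<k}. row a b j) - H))"
        by (rule tileable_Un[OF tr H(4) d2])
      have e2: "(\<Union>j\<in>{r..<k}. row a b j) - H = row a b r \<union> ((\<Union>j\<in>{Suc r..<k}. row a b j) - H)"
        using split1 disj1 H(1) by blast
      have "H \<subseteq> (\<Union>j\<in>{r..<k}. row a b j)" using H(1) split1 by blast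
      then show ?thesis using H(2,3) t2 e2 by metis
    next
      case exnz: False
      have oddrow: "even (b r - a r)" using exnz unfolding ex_def by (auto split: if_splits)
      have exr: "ex a b r = (if even (a r + int r) then 1 else -1)" using oddrow unfolding ex_def by simp
      show ?thesis
      proof (cases "s0 * ex a b r = 1 \<and> (\<forall>j. r < j \<and> j \<le> k \<longrightarrow> s0 * Dw a b r + 1 \<le> s0 * Dw a b j)")
        case True
        have "s0 * Dw a b (Suc r) \<le> s0 * Dw a b k" using True rk by (simp add: Dw_Suc algebra_simps)
        then obtain H where H: "H \<subseteq> (\<Union>j\<in>{Suc r..<k}. row a b j)" "\<forall>c\<in>H. colour c = c0" "H \<inter> M = {}"
          "tileable M ((\<Union>j\<in>{Suc r..<k}. row a b j) - H)"
          using IH[of "Suc r"] rk by (metis diff_less_mono2 lessI Suc_leI)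
        define h where "h = (b r, int r)"
        have hrow: "h \<in> row a b r"
        proof -
          have "a r \<le> 0" "int k - 1 \<le> b r" using ab by auto
          moreover have "1 \<le> int k" using rk by simp
          ultimately have "a r \<le> b r" by linarith
          then show ?thesis unfolding h_def row_def seg_def by simp
        qed
        have hcol: "colour h = c0"
        proof -
          have "colour h = even (a r + int r)" unfolding h_def colour_def using oddrow by simp
          then show ?thesis using True exr c0 s0 by (auto split: if_splits)
        qed
        have hM: "h \<notin> M" using Mb rk h_def by simp
        have tr: "tileable M (row a b r - {h})"
        proof -
          have "row a b r - {h} = seg (a r) (b r - 1) (int r)" unfolding row_def seg_def h_def by auto
          moreover have "tileable M (seg (a r) (b r - 1) (int r))" by (rule tileable_seg) (use oddrow in presburger)
          ultimately show ?thesis by simp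
        qed
        have "tileable M ((row a b r - {h}) \<union> ((\<Union>j\<in>{Suc r..<k}. row a b j) - H))"
          by (rule tileable_Un[OF tr H(4)]) (use disj1 in blast)
        moreover have "(\<Union>j\<in>{r..<k}. row a b j) - insert h H = (row a b r - {h}) \<union> ((\<Union>j\<in>{Suc r..<k}. row a b j) - H)"
          using split1 disj1 H(1) hrow by blast
        ultimately show ?thesis using H split1 hrow hcol hM by (intro exI[of _ "insert h H"]) auto
      next
        case False
        have s0ex: "s0 * ex a b r = 1 \<or> s0 * ex a b r = -1" using s0 exr by auto
        have exret: "\<exists>j. r < j \<and> j \<le> k \<and> Dw a b j = Dw a b r"
        proof (cases "s0 * ex a b r = 1")
          case True
          then obtain j where j: "r < j" "j \<le> k" "s0 * Dw a b j < s0 * Dw a b r + 1" using False by auto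
          have "s0 * Dw a b (Suc r) = s0 * Dw a b r + 1" using True by (simp add: Dw_Suc algebra_simps)
          then obtain z where z: "Suc r \<le> z" "z \<le> j" "s0 * Dw a b z = s0 * Dw a b r"
            using ivt_down[OF stepb, of "Suc r" j "s0 * Dw a b r"] j by auto
          then have "Dw a b z = Dw a b r" using s0 by auto
          then show ?thesis using z j by (intro exI[of _ z]) auto
        next
          case False
          then have "s0 * Dw a b (Suc r) = s0 * Dw a b r - 1" using s0ex by (simp add: Dw_Suc algebra_simps)
          then obtain z where z: "Suc r \<le> z" "z \<le> k" "s0 * Dw a b z = s0 * Dw a b r"
            using ivt_up[OF stepb, of "Suc r" k "s0 * Dw a b r"] rk less.prems by auto
          then have "Dw a b z = Dw a b r" using s0 by auto
          then show ?thesis using z by (intro exI[of _ z]) auto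
        qed
        define j0 where "j0 = (LEAST j. r < j \<and> j \<le> k \<and> Dw a b j = Dw a b r)"
        have j0: "r < j0" "j0 \<le> k" "Dw a b j0 = Dw a b r"
          using LeastI_ex[OF exret] unfolding j0_def by auto
        have j0min: "\<And>j. r < j \<Longrightarrow> j < j0 \<Longrightarrow> Dw a b j \<noteq> Dw a b r"
          using not_less_Least j0(2) unfolding j0_def by fastforce
        have "j0 \<noteq> Suc r" using j0(3) exnz by (auto simp: Dw_Suc)
        define r2 where "r2 = j0 - 1"
        have r2: "r < r2" "r2 < k" "Suc r2 = j0" using j0 \<open>j0 \<noteq> Suc r\<close> unfolding r2_def by auto
        have ex1: "ex a b r = 1 \<or> ex a b r = -1" using exr by auto
        have stepe: "\<forall>i. \<bar>ex a b r * (Dw a b (Suc i) - Dw a b r) - ex a b r * (Dw a b i - Dw a b r)\<bar> \<le> 1"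
        proof
          fix i
          have "ex a b i \<in> {-1, 0, 1}" by (rule ex_bound)
          then show "\<bar>ex a b r * (Dw a b (Suc i) - Dw a b r) - ex a b r * (Dw a b i - Dw a b r)\<bar> \<le> 1"
            using ex1 by (auto simp: Dw_Suc algebra_simps)
        qed
        have pos: "\<forall>j. r < j \<and> j \<le> r2 \<longrightarrow> ex a b r * (Dw a b j - Dw a b r) > 0"
        proof (intro allI impI)
          fix j assume jr: "r < j \<and> j \<le> r2"
          show "ex a b r * (Dw a b j - Dw a b r) > 0"
          proof (rule ccontr)
            assume "\<not> ex a b r * (Dw a b j - Dw a b r) > 0"
            then have le0: "ex a b r * (Dw a b j - Dw a b r) \<le> 0" by simp
            have "ex a b r * (Dw a b (Suc r) - Dw a b r) = 1" using ex1 by (auto simp: Dw_Suc)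
            then obtain z where z: "Suc r \<le> z" "z \<le> j" "ex a b r * (Dw a b z - Dw a b r) = 0"
              using ivt_down[OF stepe, of "Suc r" j 0] jr le0 by auto
            then have "Dw a b z = Dw a b r" using ex1 by auto
            moreover have "z < j0" using z jr r2 by simp
            ultimately show False using j0min z by simp
          qed
        qed
        have ret: "Dw a b (Suc r2) = Dw a b r" using r2 j0 by simp
        have tE: "tileable M (\<Union>j\<in>{r..r2}. row a b j)"
          by (rule episode[OF r2(2) exnz pos ret ab Mx])
        have "s0 * Dw a b j0 \<le> s0 * Dw a b k" using j0 less.prems by simp
        moreover have "k - j0 < k - r" using j0 rk by simp
        ultimately obtain H where H: "H \<subseteq> (\<Union>j\<in>{j0..<k}. row a b j)" "\<forall>c\<in>H. colour c = c0" "H \<inter> M = {}"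
          "tileable M ((\<Union>j\<in>{j0..<k}. row a b j) - H)"
          using IH[of j0] j0 by blast
        have split2: "(\<Union>j\<in>{r..<k}. row a b j) = (\<Union>j\<in>{r..r2}. row a b j) \<union> (\<Union>j\<in>{j0..<k}. row a b j)"
        proof -
          have "{r..<k} = {r..r2} \<union> {j0..<k}" using r2 by auto
          then show ?thesis by auto
        qed
        have disj2: "(\<Union>j\<in>{r..r2}. row a b j) \<inter> (\<Union>j\<in>{j0..<k}. row a b j) = {}"
          using r2 by (auto simp: row_def seg_def)
        have "tileable M ((\<Union>j\<in>{r..r2}. row a b j) \<union> ((\<Union>j\<in>{j0..<k}. row a b j) - H))"
          by (rule tileable_Un[OF tE H(4)]) (use disj2 in blast)
        moreover have "(\<Union>j\<in>{r..<k}. row a b j) - H = (\<Union>j\<in>{r..r2}. row a b j) \<union> ((\<Union>j\<in>{j0..<k}. row a b j) - H)"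
          using split2 disj2 H(1) by blast
        ultimately show ?thesis using H split2 by (intro exI[of _ H]) auto
      qed
    qed
  qed
qed

lemma domino_fin_card: "domino d \<Longrightarrow> finite d \<and> card d = 2"
  unfolding domino_def hdomino_def vdomino_def by auto

lemma domino_colour: "domino d \<Longrightarrow> card {c \<in> d. colour c = X} = 1"
proof -
  assume "domino d"
  then obtain i j where "d = {(i, j), (i + 1, j)} \<or> d = {(i, j), (i, j + 1)}"
    unfolding domino_def hdomino_def vdomino_def by blast
  then show ?thesis
  proof
    assume d: "d = {(i, j), (i + 1, j)}"
    show ?thesis
    proof (cases "colour (i, j) = X")
      case True
      then have "{c \<in> d. colour c = X} = {(i, j)}" using d by (auto simp: colour_def)
      then show ?thesis by simp
    next
      case False
      then have "{c \<in> d. colour c = X} = {(i + 1, j)}" using d by (auto simp: colour_def)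
      then show ?thesis by simp
    qed
  next
    assume d: "d = {(i, j), (i, j + 1)}"
    show ?thesis
    proof (cases "colour (i, j) = X")
      case True
      then have "{c \<in> d. colour c = X} = {(i, j)}" using d by (auto simp: colour_def)
      then show ?thesis by simp
    next
      case False
      then have "{c \<in> d. colour c = X} = {(i, j + 1)}" using d by (auto simp: colour_def)
      then show ?thesis by simp
    qed
  qed
qed

lemma pack_card_union:
  assumes "finite D" "\<forall>d\<in>D. domino d" "\<forall>d\<in>D. \<forall>d'\<in>D. d \<noteq> d' \<longrightarrow> d \<inter> d' = {}"
  shows "card (\<Union>D) = 2 * card D"
proof -
  have "card (\<Union>(id ` D)) = (\<Sum>d\<in>D. card (id d))"
    by (rule card_UN_disjoint) (use assms domino_fin_card in auto)
  also have "\<dots> = (\<Sum>d\<in>D. 2)" using assms domino_fin_card by (intro sum.cong) auto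
  finally show ?thesis by simp
qed

lemma pack_card_colour:
  assumes "finite D" "\<forall>d\<in>D. domino d" "\<forall>d\<in>D. \<forall>d'\<in>D. d \<noteq> d' \<longrightarrow> d \<inter> d' = {}"
  shows "card {c \<in> \<Union>D. colour c = X} = card D"
proof -
  have eq: "{c \<in> \<Union>D. colour c = X} = (\<Union>d\<in>D. {c \<in> d. colour c = X})" by auto
  have "card (\<Union>d\<in>D. {c \<in> d. colour c = X}) = (\<Sum>d\<in>D. card {c \<in> d. colour c = X})"
    by (rule card_UN_disjoint) (use assms domino_fin_card in auto)
  also have "\<dots> = (\<Sum>d\<in>D. 1)" using assms domino_colour by (intro sum.cong) auto
  finally show ?thesis using eq by simp
qed

lemma packing_le_colour:
  assumes "packing P D" "finite P"
  shows "card D \<le> card {c \<in> P. colour c = X}"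
proof -
  have D: "finite D" "\<forall>d\<in>D. domino d" "\<forall>d\<in>D. \<forall>d'\<in>D. d \<noteq> d' \<longrightarrow> d \<inter> d' = {}" "\<Union>D \<subseteq> P"
    using assms(1) unfolding packing_def by auto
  have "card D = card {c \<in> \<Union>D. colour c = X}" using pack_card_colour[OF D(1-3)] by simp
  also have "\<dots> \<le> card {c \<in> P. colour c = X}" using D(4) assms(2) by (intro card_mono) auto
  finally show ?thesis .
qed

lemma P_rows:
  fixes L R :: "cell set" and k l :: nat
  assumes Lc: "\<And>x y. (x, y) \<in> L \<Longrightarrow> x = -1 \<and> 0 \<le> y \<and> y < int k"
    and Rc: "\<And>x y. (x, y) \<in> R \<Longrightarrow> x = int l \<and> 0 \<le> y \<and> y < int k"
    and a_def: "\<And>j. a j = (if (-1, int j) \<in> L then -1 else 0)"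
    and b_def: "\<And>j. bb j = (if (int l, int j) \<in> R then int l else int l - 1)"
  shows "L \<union> R \<union> rect_cells 0 (int l) 0 (int k) = (\<Union>j\<in>{0..<k}. row a bb j)"
proof (rule set_eqI)
  fix c :: cell
  obtain x y where c: "c = (x, y)" by (cases c)
  have bge: "\<And>j. int l - 1 \<le> bb j" "\<And>j. a j \<le> 0" "\<And>j. -1 \<le> a j" "\<And>j. bb j \<le> int l"
    using a_def b_def by auto
  show "c \<in> L \<union> R \<union> rect_cells 0 (int l) 0 (int k) \<longleftrightarrow> c \<in> (\<Union>j\<in>{0..<k}. row a bb j)"
  proof
    assume "c \<in> L \<union> R \<union> rect_cells 0 (int l) 0 (int k)"
    then have cP: "(x, y) \<in> L \<or> (x, y) \<in> R \<or> (0 \<le> x \<and> x + 1 \<le> int l \<and> 0 \<le> y \<and> y + 1 \<le> int k)"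
      using c unfolding rect_cells_def by blast
    then have y: "0 \<le> y" "y < int k" using Lc Rc by force+
    define j where "j = nat y"
    have yj: "y = int j" "j < k" using y unfolding j_def by auto
    have "a j \<le> x \<and> x \<le> bb j"
    proof (rule disjE[OF cP])
      assume h: "(x, y) \<in> L"
      then have "x = -1" using Lc by blast
      moreover have "a j = -1" using h yj a_def \<open>x = -1\<close> by simp
      ultimately show ?thesis using bge(1)[of j] by simp
    next
      assume "(x, y) \<in> R \<or> (0 \<le> x \<and> x + 1 \<le> int l \<and> 0 \<le> y \<and> y + 1 \<le> int k)"
      then show ?thesis
      proof
        assume h: "(x, y) \<in> R"
        then have "x = int l" using Rc by blast
        moreover have "bb j = int l" using h yj b_def \<open>x = int l\<close> by simp
        ultimately show ?thesis using bge(2)[of j] by simp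
      next
        assume "0 \<le> x \<and> x + 1 \<le> int l \<and> 0 \<le> y \<and> y + 1 \<le> int k"
        then show ?thesis using bge(1)[of j] bge(2)[of j] by linarith
      qed
    qed
    then show "c \<in> (\<Union>j\<in>{0..<k}. row a bb j)" unfolding c mem_rows2 using yj by blast
  next
    assume "c \<in> (\<Union>j\<in>{0..<k}. row a bb j)"
    then obtain j where j: "j < k" "y = int j" "a j \<le> x" "x \<le> bb j" unfolding c mem_rows2 by blast
    show "c \<in> L \<union> R \<union> rect_cells 0 (int l) 0 (int k)"
    proof (cases "x = -1")
      case True
      then have "a j = -1" using j(3) bge(3)[of j] by simp
      then have "(-1, int j) \<in> L" using a_def[of j] by (simp split: if_splits)
      then show ?thesis using c j True by simp
    next
      case False
      show ?thesis
      proof (cases "x = int l")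
        case True
        then have "bb j = int l" using j(4) bge(4)[of j] by simp
        then have "(int l, int j) \<in> R" using b_def[of j] by (simp split: if_splits)
        then show ?thesis using c j True by simp
      next
        case False
        have "0 \<le> x" using j(3) bge(3)[of j] \<open>x \<noteq> -1\<close> by linarith
        moreover have "x + 1 \<le> int l" using j(4) bge(4)[of j] False by linarith
        ultimately show ?thesis using c j unfolding rect_cells_def by simp
      qed
    qed
  qed
qed

theorem lemma6:
  fixes k l :: nat and L R P :: "cell set" and b w :: nat
  assumes "even l"
    and "finite L" and "L \<subseteq> rect_cells (-1) 0 0 (int k)"
    and "finite R" and "R \<subseteq> rect_cells (int l) (int l + 1) 0 (int k)"
    and "P = L \<union> R \<union> rect_cells 0 (int l) 0 (int k)"
    and "(b = card {c\<in>P. colour c} \<and> w = card {c\<in>P. \<not> colour c}) \<or>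
         (b = card {c\<in>P. \<not> colour c} \<and> w = card {c\<in>P. colour c})"
    and "b \<ge> w"
    and "l \<ge> 2 * k"
  shows "(\<forall>D. max_packing P D \<longrightarrow> card (uncovered P D) = b - w) \<and>
         (\<exists>D. max_packing P D \<and>
              rect_cells (int k + 1) (int l - int k - 1) 0 (int k) \<subseteq> \<Union>D \<and>
              (\<forall>d\<in>D. d \<inter> rect_cells (int k + 1) (int l - int k - 1) 0 (int k) \<noteq> {}
                       \<longrightarrow> hdomino d))"
proof -
  define a :: "nat \<Rightarrow> int" where "a j = (if (-1, int j) \<in> L then -1 else 0)" for j
  define bb :: "nat \<Rightarrow> int" where "bb j = (if (int l, int j) \<in> R then int l else int l - 1)" for j
  define M where "M = rect_cells (int k + 1) (int l - int k - 1) 0 (int k)"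
  have Lc: "\<And>x y. (x, y) \<in> L \<Longrightarrow> x = -1 \<and> 0 \<le> y \<and> y < int k"
    using assms(3) unfolding rect_cells_def by auto
  have Rc: "\<And>x y. (x, y) \<in> R \<Longrightarrow> x = int l \<and> 0 \<le> y \<and> y < int k"
    using assms(5) unfolding rect_cells_def by auto
  have lk: "2 * int k \<le> int l" using assms(9) by simp
  have Prow: "P = (\<Union>j\<in>{0..<k}. row a bb j)"
    unfolding assms(6) by (rule P_rows[OF Lc Rc a_def bb_def])
  have finP: "finite P"
  proof -
    have "P \<subseteq> {-1..int l} \<times> {0..int k}" using Prow by (auto simp: row_def seg_def a_def bb_def split: if_splits)
    then show ?thesis by (rule finite_subset) simp
  qed
  have ab: "\<forall>j. a j \<le> 0 \<and> int k - 1 \<le> bb j" using lk unfolding a_def bb_def by auto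
  have Mx: "\<forall>x y. (x, y) \<in> M \<longrightarrow> int k \<le> x" unfolding M_def rect_cells_def by auto
  have Mb: "\<forall>j<k. (bb j, int j) \<notin> M" unfolding M_def rect_cells_def bb_def by auto
  define s0 :: int where "s0 = (if 0 \<le> Dw a bb k then 1 else -1)"
  define c0 where "c0 = (s0 = 1)"
  have s0: "s0 = 1 \<or> s0 = -1" unfolding s0_def by simp
  have start: "s0 * Dw a bb 0 \<le> s0 * Dw a bb k" unfolding s0_def by (simp add: Dw_0)
  obtain H where H: "H \<subseteq> P" "\<forall>c\<in>H. colour c = c0" "H \<inter> M = {}" "tileable M (P - H)"
    using global[OF ab Mx Mb s0 c0_def, of 0] start Prow by auto
  obtain D0 where D0: "tiles M (P - H) D0" using H(4) tileable_def by blast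
  have D0p: "finite D0" "\<forall>d\<in>D0. domino d" "\<forall>d\<in>D0. \<forall>d'\<in>D0. d \<noteq> d' \<longrightarrow> d \<inter> d' = {}"
    "\<Union>D0 = P - H" "\<forall>d\<in>D0. d \<inter> M \<noteq> {} \<longrightarrow> hdomino d"
    using D0 unfolding tiles_def by auto
  have pack0: "packing P D0" unfolding packing_def using D0p by auto
  have finH: "finite H" using H(1) finP finite_subset by blast
  have cnt: "card {c \<in> P. colour c = X} = card D0 + card {c \<in> H. colour c = X}" for X
  proof -
    have "{c \<in> P. colour c = X} = {c \<in> \<Union>D0. colour c = X} \<union> {c \<in> H. colour c = X}"
      using D0p(4) H(1) by auto
    moreover have "card ({c \<in> \<Union>D0. colour c = X} \<union> {c \<in> H. colour c = X}) = card {c \<in> \<Union>D0. colour c = X} + card {c \<in> H. colour c = X}"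
      by (rule card_Un_disjoint) (use finP finH D0p(4) in auto)
    ultimately show ?thesis using pack_card_colour[OF D0p(1-3)] by simp
  qed
  have cH1: "{c \<in> H. colour c = c0} = H" using H(2) by auto
  have cH2: "{c \<in> H. colour c = (\<not> c0)} = {}" using H(2) by auto
  have n1: "card {c \<in> P. colour c = c0} = card D0 + card H" using cnt[of c0] cH1 by simp
  have n2: "card {c \<in> P. colour c = (\<not> c0)} = card D0" using cnt[of "\<not> c0"] cH2 by simp
  have NT: "card {c \<in> P. colour c} = card {c \<in> P. colour c = True}" by simp
  have NF: "card {c \<in> P. \<not> colour c} = card {c \<in> P. colour c = False}" by simp
  have wb: "w = card D0 \<and> b = card D0 + card H"
  proof (cases c0)
    case True
    then have e: "card {c \<in> P. colour c} = card D0 + card H" "card {c \<in> P. \<not> colour c} = card D0"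
      using n1 n2 by simp_all
    have "(b = card D0 + card H \<and> w = card D0) \<or> (b = card D0 \<and> w = card D0 + card H)"
      using assms(7) unfolding e .
    then show ?thesis using assms(8) by (elim disjE) simp_all
  next
    case False
    then have e: "card {c \<in> P. \<not> colour c} = card D0 + card H" "card {c \<in> P. colour c} = card D0"
      using n1 n2 by simp_all
    have "(b = card D0 \<and> w = card D0 + card H) \<or> (b = card D0 + card H \<and> w = card D0)"
      using assms(7) unfolding e .
    then show ?thesis using assms(8) by (elim disjE) simp_all
  qed
  have cardP: "card P = b + w"
  proof -
    have "P = {c \<in> P. colour c} \<union> {c \<in> P. \<not> colour c}" by auto
    then have "card P = card {c \<in> P. colour c} + card {c \<in> P. \<not> colour c}"
      by (metis (no_types, lifting) card_Un_disjoint disjoint_iff finP finite_Un mem_Collect_eq)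
    then show ?thesis using assms(7) by auto
  qed
  have le: "card D \<le> card D0" if "packing P D" for D
    using packing_le_colour[OF that finP, of "\<not> c0"] n2 by simp
  have max0: "max_packing P D0" unfolding max_packing_def using pack0 le by blast
  have part1: "\<forall>D. max_packing P D \<longrightarrow> card (uncovered P D) = b - w"
  proof (intro allI impI)
    fix D assume mD: "max_packing P D"
    then have pD: "packing P D" and ge: "card D0 \<le> card D" using pack0 unfolding max_packing_def by auto
    have cD: "card D = w" using le[OF pD] ge wb by simp
    have Dp: "finite D" "\<forall>d\<in>D. domino d" "\<forall>d\<in>D. \<forall>d'\<in>D. d \<noteq> d' \<longrightarrow> d \<inter> d' = {}" "\<Union>D \<subseteq> P"
      using pD unfolding packing_def by auto
    have "card (uncovered P D) = card P - card (\<Union>D)"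
      unfolding uncovered_def using Dp(4) finP by (simp add: card_Diff_subset finite_subset)
    also have "\<dots> = (b + w) - 2 * w" using pack_card_union[OF Dp(1-3)] cD cardP by simp
    finally show "card (uncovered P D) = b - w" by simp
  qed
  have MP: "M \<subseteq> P" unfolding M_def assms(6) rect_cells_def by auto
  have part2: "M \<subseteq> \<Union>D0" using MP H(3) D0p(4) by blast
  show ?thesis using part1 max0 part2 D0p(5) unfolding M_def by blast
qed

end
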